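(* Let $f:\mathbb{R}^d\to\mathbb{R}$ and $P:\mathbb{R}^d\to\mathbb{R}^s$ be continuously differentiable, $D\subseteq\mathbb{R}^s$ closed, $\Omega=\{z\mid P(z)\in D\}$, and let $\bar z\in\Omega$ be B-stationary for the problem $\min f(z)$ s.t. $P(z)\in D$. Assume that GGCQ holds at $\bar z$ and that the mapping $u\rightrightarrows\nabla P(\bar z)u-T_D(P(\bar z))$ is metrically subregular at $(0,0)$. Consider the program \[\min_{(u,y)\in\mathbb{R}^d\times\mathbb{R}^s}\ \langle\nabla f(\bar z),u\rangle+\tfrac12\|y\|^2\quad\text{subject to}\quad\nabla P(\bar z)u+y\in T_D(P(\bar z)).\tag{A}\] Then: the mapping $(u,y)\rightrightarrows\nabla P(\bar z)u+y-T_D(P(\bar z))$ is metrically subregular at $((\bar u,\bar y),0)$ for every point $(\bar u,\bar y)$ feasible for (A); the program (A) is bounded below; and for every B-stationary solution $(\bar u,\bar y)$ of (A) there is a multiplier $w^\ast\in\widehat N_{T_D(P(\bar z))}(\nabla P(\bar z)\bar u+\bar y)$ such that \[\nabla f(\bar z)+\nabla P(\bar z)^\ast w^\ast=0,\qquad\bar y+w^\ast=0.\]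
   Context: Tangent cone $T_\Omega(\bar z)=\{w\mid \exists t_k\downarrow0,\ w_k\to w,\ \bar z+t_kw_k\in\Omega\}$; polar cone $K^\ast=\{z^\ast\mid\langle z^\ast,w\rangle\le0\ \forall w\in K\}$; regular normal cone $\widehat N_\Omega(\bar z)=(T_\Omega(\bar z))^\ast$. Linearized tangent cone $T^{\rm lin}_{P,D}(\bar z)=\{u\mid\nabla P(\bar z)u\in T_D(P(\bar z))\}$. For a problem of minimizing a $C^1$ function $h$ over a closed set $S$, a feasible point $\bar x$ is B-stationary if $0\in\nabla h(\bar x)+\widehat N_S(\bar x)$. GGCQ holds at $\bar z$ if $\widehat N_\Omega(\bar z)=(T^{\rm lin}_{P,D}(\bar z))^\ast$. A mapping $M$ is metrically subregular at $(\bar z,\bar w)\in\operatorname{gph}M$ if there are a neighborhood $W$ of $\bar z$ and $\kappa>0$ with $\operatorname{dist}(z,M^{-1}(\bar w))\le\kappa\operatorname{dist}(\bar w,M(z))$ for $z\in W$. *)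

theory Defs
  imports "HOL-Analysis.Analysis"
begin

definition tangent_cone :: "'a::real_normed_vector set \<Rightarrow> 'a \<Rightarrow> 'a set" where
  "tangent_cone \<Omega> z = {w. \<exists>t u. (\<forall>k. t k > 0) \<and> t \<longlonglongrightarrow> 0 \<and> u \<longlonglongrightarrow> w
                                \<and> (\<forall>k. z + t k *\<^sub>R u k \<in> \<Omega>)}"

definition polar_cone :: "'a::real_inner set \<Rightarrow> 'a set" where
  "polar_cone K = {v. \<forall>w\<in>K. inner v w \<le> 0}"

definition regular_normal_cone :: "'a::real_inner set \<Rightarrow> 'a \<Rightarrow> 'a set" where
  "regular_normal_cone \<Omega> z = polar_cone (tangent_cone \<Omega> z)"

text \<open>Linearized tangent cone of {z. P z \<in> D} at z, given the derivative DPz = \<nabla>P(z).\<close>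
definition lin_tangent_cone :: "('a::real_normed_vector \<Rightarrow> 'b::real_normed_vector) \<Rightarrow> 'b set \<Rightarrow> 'b \<Rightarrow> 'a set" where
  "lin_tangent_cone DPz D Pz = {u. DPz u \<in> tangent_cone D Pz}"

definition b_stationary :: "('a::real_inner \<Rightarrow> real) \<Rightarrow> 'a set \<Rightarrow> 'a \<Rightarrow> bool" where
  "b_stationary h S x \<longleftrightarrow> x \<in> S \<and>
     (\<exists>g. (GDERIV h x :> g) \<and> 0 \<in> (\<lambda>n. g + n) ` regular_normal_cone S x)"

text \<open>Metric subregularity of a set-valued map M at (zb, wb) in its graph.
  If M z is empty, dist(wb, M z) = +\<infinity> and the inequality is vacuous.\<close>
definition metrically_subregular :: "('a::metric_space \<Rightarrow> 'b::metric_space set) \<Rightarrow> 'a \<Rightarrow> 'b \<Rightarrow> bool" where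
  "metrically_subregular M zb wb \<longleftrightarrow> wb \<in> M zb \<and>
     (\<exists>W \<kappa>. open W \<and> zb \<in> W \<and> \<kappa> > 0 \<and>
        (\<forall>z\<in>W. M z \<noteq> {} \<longrightarrow> infdist z {x. wb \<in> M x} \<le> \<kappa> * infdist wb (M z)))"

end

theory Submission imports Defs begin

lemma gderiv_unique:
  assumes "GDERIV f x :> a" "GDERIV f x :> b" shows "a = b"
proof -
  have "(\<lambda>h. inner h a) = (\<lambda>h. inner h b)"
    using assms has_derivative_unique unfolding has_derivative_def
    by (metis assms gderiv_def has_derivative_unique)
  then have "inner (a - b) a = inner (a - b) b" by metis
  then have "inner (a - b) (a - b) = 0" by (simp add: inner_diff_right)
  then show ?thesis by simp
qed

lemma tc_zero:
  assumes "z \<in> \<Omega>" shows "0 \<in> tangent_cone \<Omega> z"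
  unfolding tangent_cone_def
  apply (rule CollectI)
  apply (rule exI[of _ "\<lambda>n. inverse (real (Suc n))"])
  apply (rule exI[of _ "\<lambda>n. 0"])
  using assms LIMSEQ_inverse_real_of_nat by auto

lemma tc_scale:
  assumes "w \<in> tangent_cone \<Omega> z" "c > 0" shows "c *\<^sub>R w \<in> tangent_cone \<Omega> z"
proof -
  obtain t u where h: "\<forall>k. t k > 0" "t \<longlonglongrightarrow> 0" "u \<longlonglongrightarrow> w" "\<forall>k. z + t k *\<^sub>R u k \<in> \<Omega>"
    using assms(1) unfolding tangent_cone_def by blast
  have "(\<lambda>k. t k / c) \<longlonglongrightarrow> 0 / c" using assms(2) by (intro tendsto_intros h) simp
  moreover have "(\<lambda>k. c *\<^sub>R u k) \<longlonglongrightarrow> c *\<^sub>R w" by (intro tendsto_intros h)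
  moreover have "\<forall>k. t k / c > 0" using h assms(2) by simp
  moreover have "\<forall>k. z + (t k / c) *\<^sub>R (c *\<^sub>R u k) \<in> \<Omega>" proof -
    have "c \<noteq> 0" using assms(2) by simp
    then show ?thesis using h by simp
  qed
  ultimately show ?thesis unfolding tangent_cone_def
    by (intro CollectI exI[of _ "\<lambda>k. t k / c"] exI[of _ "\<lambda>k. c *\<^sub>R u k"]) simp
qed

lemma tc_in:
  assumes "w \<in> T" "c > 0" "\<And>x c. x \<in> T \<Longrightarrow> c > 0 \<Longrightarrow> c *\<^sub>R x \<in> T" shows "c *\<^sub>R w \<in> T"
  using assms by blast

lemma part1:
  fixes A :: "'a::euclidean_space \<Rightarrow> 'b::euclidean_space"
  assumes "A ub + yb \<in> T"
  shows "metrically_subregular (\<lambda>(u,y). (\<lambda>t. A u + y - t) ` T) (ub,yb) 0"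
  unfolding metrically_subregular_def
proof (intro conjI exI[of _ UNIV] exI[of _ 1])
  show "0 \<in> (case (ub, yb) of (u, y) \<Rightarrow> (\<lambda>t. A u + y - t) ` T)"
    unfolding case_prod_conv by (rule image_eqI[of _ _ "A ub + yb"]) (simp_all add: assms)
  show "\<forall>z\<in>UNIV. (case z of (u, y) \<Rightarrow> (\<lambda>t. A u + y - t) ` T) \<noteq> {} \<longrightarrow>
        infdist z {x. 0 \<in> (case x of (u, y) \<Rightarrow> (\<lambda>t. A u + y - t) ` T)}
        \<le> 1 * infdist 0 (case z of (u, y) \<Rightarrow> (\<lambda>t. A u + y - t) ` T)"
  proof (intro ballI impI)
    fix z :: "'a \<times> 'b"
    obtain u y where z: "z = (u,y)" by (cases z)
    assume ne: "(case z of (u, y) \<Rightarrow> (\<lambda>t. A u + y - t) ` T) \<noteq> {}"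
    let ?S = "{x. 0 \<in> (case x of (u, y) \<Rightarrow> (\<lambda>t. A u + y - t) ` T)}"
    have ne': "(\<lambda>t. A u + y - t) ` T \<noteq> {}" using ne z by simp
    have "infdist z ?S \<le> (INF m\<in>(\<lambda>t. A u + y - t) ` T. dist 0 m)"
    proof (rule cINF_greatest)
      show "(\<lambda>t. A u + y - t) ` T \<noteq> {}" by (rule ne')
      fix m assume "m \<in> (\<lambda>t. A u + y - t) ` T"
      then obtain t where t: "t \<in> T" "m = A u + y - t" by blast
      have "(u, t - A u) \<in> ?S" unfolding mem_Collect_eq case_prod_conv
        by (rule image_eqI[of _ _ t]) (simp_all add: t)
      then have "infdist (u,y) ?S \<le> dist (u,y) (u, t - A u)" by (rule infdist_le)
      also have "\<dots> = dist y (t - A u)" by (simp add: dist_Pair_Pair)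
      also have "\<dots> = norm (A u + y - t)"
      proof -
        have "y - (t - A u) = A u + y - t" by (simp add: algebra_simps)
        then show ?thesis by (simp only: dist_norm)
      qed
      also have "\<dots> = dist 0 m" using t by (simp add: dist_norm norm_minus_commute)
      finally show "infdist z ?S \<le> dist 0 m" unfolding z .
    qed
    also have "\<dots> = infdist 0 ((\<lambda>t. A u + y - t) ` T)" by (rule infdist_notempty[OF ne', symmetric])
    finally show "infdist z ?S \<le> 1 * infdist 0 (case z of (u, y) \<Rightarrow> (\<lambda>t. A u + y - t) ` T)"
      unfolding z case_prod_conv by simp
  qed
qed simp_all

lemma part3:
  fixes A :: "'a::euclidean_space \<Rightarrow> 'b::euclidean_space" and g :: 'a
  assumes lin: "linear A"
   and bs: "b_stationary (\<lambda>(u,y). inner g u + (1/2) * (norm y)\<^sup>2) {(u,y). A u + y \<in> T} (ub,yb)"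
  shows "\<exists>w \<in> regular_normal_cone T (A ub + yb). g + adjoint A w = 0 \<and> yb + w = 0"
proof -
  let ?F = "{(u,y). A u + y \<in> T}"
  let ?phi = "(\<lambda>(u,y). inner g u + (1/2) * (norm y)\<^sup>2) :: 'a \<times> 'b \<Rightarrow> real"
  have feas: "A ub + yb \<in> T" using bs by (simp add: b_stationary_def)
  obtain G where G: "GDERIV ?phi (ub,yb) :> G" and nG: "-G \<in> regular_normal_cone ?F (ub,yb)"
  proof -
    from bs obtain G where G: "GDERIV ?phi (ub,yb) :> G"
      and "0 \<in> (\<lambda>n. G + n) ` regular_normal_cone ?F (ub,yb)"
      unfolding b_stationary_def by blast
    then obtain n where n: "n \<in> regular_normal_cone ?F (ub,yb)" and "0 = G + n" by blast
    then have "n = - G" by (simp add: eq_neg_iff_add_eq_0 add.commute)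
    then show ?thesis using that G n by blast
  qed
  have phi_eq: "?phi = (\<lambda>p. inner g (fst p) + (1/2) * inner (snd p) (snd p))"
    by (rule ext) (simp add: case_prod_beta power2_norm_eq_inner)
  have "GDERIV ?phi (ub,yb) :> (g, yb)"
    unfolding gderiv_def phi_eq
    apply (rule derivative_eq_intros refl)+
    apply (auto simp: inner_prod_def inner_commute)
    done
  then have Gg: "G = (g, yb)" using G gderiv_unique by blast
  have key: "(h, d - A h) \<in> tangent_cone ?F (ub,yb)" if d: "d \<in> tangent_cone T (A ub + yb)" for h d
  proof -
    obtain t dd where h: "\<forall>k. t k > 0" "t \<longlonglongrightarrow> 0" "dd \<longlonglongrightarrow> d" "\<forall>k. A ub + yb + t k *\<^sub>R dd k \<in> T"
      using d unfolding tangent_cone_def by blast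
    have c: "(\<lambda>k. (h, dd k - A h)) \<longlonglongrightarrow> (h, d - A h)" by (intro tendsto_intros h)
    have m: "(ub, yb) + t k *\<^sub>R (h, dd k - A h) \<in> ?F" for k
    proof -
      have "A (ub + t k *\<^sub>R h) + (yb + t k *\<^sub>R (dd k - A h)) = A ub + yb + t k *\<^sub>R dd k"
        using lin by (simp add: linear_add linear_scale algebra_simps)
      then have "A (ub + t k *\<^sub>R h) + (yb + t k *\<^sub>R (dd k - A h)) \<in> T" using h(4) by (simp only:)
      then show ?thesis by (simp only: scaleR_Pair add_Pair mem_Collect_eq case_prod_conv)
    qed
    show ?thesis unfolding tangent_cone_def
      by (intro CollectI exI[of _ t] exI[of _ "\<lambda>k. (h, dd k - A h)"] conjI h(1,2) c allI m)
  qed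
  have ineq: "inner (-(g,yb)) (h, d - A h) \<le> 0" if "d \<in> tangent_cone T (A ub + yb)" for h d
    using nG key[OF that, of h] Gg unfolding regular_normal_cone_def polar_cone_def by blast
  have T0: "0 \<in> tangent_cone T (A ub + yb)" by (rule tc_zero[OF feas])
  have "inner h (adjoint A yb - g) \<le> 0" for h
  proof -
    have "inner (-(g,yb)) (h, 0 - A h) \<le> 0" by (rule ineq[OF T0])
    moreover have "inner yb (A h) = inner h (adjoint A yb)"
      using adjoint_works[OF lin] by (metis inner_commute)
    ultimately show ?thesis by (simp add: inner_prod_def inner_diff_right inner_commute[of g h])
  qed
  from this[of "adjoint A yb - g"] have "\<not> 0 < inner (adjoint A yb - g) (adjoint A yb - g)" by linarith
  then have "adjoint A yb - g = 0" by (simp only: inner_gt_zero_iff not_not)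
  then have g: "g = adjoint A yb" by simp
  have pol: "- yb \<in> regular_normal_cone T (A ub + yb)"
    unfolding regular_normal_cone_def polar_cone_def
  proof (intro CollectI ballI)
    fix d assume "d \<in> tangent_cone T (A ub + yb)"
    from ineq[OF this, of 0] show "inner (- yb) d \<le> 0"
      using lin by (simp add: inner_prod_def linear_0)
  qed
  have "adjoint A (- yb) = - adjoint A yb"
    using adjoint_linear[OF lin] by (simp add: linear_neg)
  then show ?thesis using pol g by (intro bexI[of _ "-yb"]) auto
qed

lemma part2:
  fixes A :: "'a::euclidean_space \<Rightarrow> 'b::euclidean_space" and g :: 'a
  assumes lin: "linear A" and T0: "0 \<in> T"
    and cone: "\<And>x c. x \<in> T \<Longrightarrow> c > 0 \<Longrightarrow> c *\<^sub>R x \<in> T"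
    and pol: "\<And>v. A v \<in> T \<Longrightarrow> inner g v \<ge> 0"
    and sr: "metrically_subregular (\<lambda>u. (\<lambda>t. A u - t) ` T) 0 0"
  shows "bdd_below ((\<lambda>(u,y). inner g u + (1/2) * (norm y)\<^sup>2) ` {(u,y). A u + y \<in> T})"
proof -
  obtain W \<kappa> where W: "open W" "0 \<in> W" "\<kappa> > 0"
    and Wk: "\<forall>z\<in>W. (\<lambda>t. A z - t) ` T \<noteq> {} \<longrightarrow>
          infdist z {x. 0 \<in> (\<lambda>t. A x - t) ` T} \<le> \<kappa> * infdist 0 ((\<lambda>t. A z - t) ` T)"
    using sr unfolding metrically_subregular_def by blast
  obtain e where e: "e > 0" "ball 0 e \<subseteq> W" using W open_contains_ball by blast
  let ?L = "{x. 0 \<in> (\<lambda>t. A x - t) ` T}"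
  have L: "?L = {x. A x \<in> T}" by force
  have approx: "\<exists>v. A v \<in> T \<and> norm (u - v) < \<kappa> * norm y + 1" if uy: "A u + y \<in> T" for u y
  proof -
    define l where "l = e / (2 * (norm u + 1))"
    have l0: "l > 0" unfolding l_def using e(1) by (intro divide_pos_pos) (auto intro: add_nonneg_pos)
    have "norm (l *\<^sub>R u) < e"
    proof -
      have q: "norm u / (2 * (norm u + 1)) < 1" by (simp add: divide_less_eq add_nonneg_pos)
      have "norm (l *\<^sub>R u) = e * (norm u / (2 * (norm u + 1)))" using l0 e(1) by (simp add: l_def)
      also have "\<dots> < e * 1" by (rule mult_strict_left_mono[OF q e(1)])
      finally show ?thesis by simp
    qed
    then have inW: "l *\<^sub>R u \<in> W" using e by auto
    have tT: "l *\<^sub>R (A u + y) \<in> T" using cone[OF uy l0] .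
    have "A (l *\<^sub>R u) - l *\<^sub>R (A u + y) = - (l *\<^sub>R y)"
      using lin by (simp add: linear_scale scaleR_right_distrib)
    then have m: "- (l *\<^sub>R y) \<in> (\<lambda>t. A (l *\<^sub>R u) - t) ` T"
      using tT by (metis image_eqI)
    have "infdist 0 ((\<lambda>t. A (l *\<^sub>R u) - t) ` T) \<le> dist 0 (- (l *\<^sub>R y))" by (rule infdist_le[OF m])
    also have "\<dots> = l * norm y" using l0 by simp
    finally have i1: "infdist 0 ((\<lambda>t. A (l *\<^sub>R u) - t) ` T) \<le> l * norm y" .
    have ne: "(\<lambda>t. A (l *\<^sub>R u) - t) ` T \<noteq> {}" using m by blast
    have "infdist (l *\<^sub>R u) ?L \<le> \<kappa> * infdist 0 ((\<lambda>t. A (l *\<^sub>R u) - t) ` T)"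
      using Wk inW ne by blast
    also have "\<dots> \<le> \<kappa> * (l * norm y)" using i1 W(3) by (simp add: mult_left_mono)
    finally have "infdist (l *\<^sub>R u) ?L \<le> \<kappa> * (l * norm y)" .
    then have lt: "infdist (l *\<^sub>R u) ?L < l * (\<kappa> * norm y + 1)" using l0 by (simp add: algebra_simps)
    have "A 0 \<in> T" using T0 lin by (simp add: linear_0)
    then have Lne: "?L \<noteq> {}" using L by blast
    obtain v' where v': "v' \<in> ?L" "dist (l *\<^sub>R u) v' < l * (\<kappa> * norm y + 1)"
    proof -
      have bb: "bdd_below ((\<lambda>a. dist (l *\<^sub>R u) a) ` ?L)"
        by (rule bdd_belowI[of _ 0]) auto
      show ?thesis using lt unfolding infdist_notempty[OF Lne] cINF_less_iff[OF Lne bb] using that by blast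
    qed
    have "A v' \<in> T" using v'(1) L by blast
    then have Av: "A ((1/l) *\<^sub>R v') \<in> T"
      using cone[of "A v'" "1/l"] l0 lin by (simp add: linear_scale)
    have "u - (1/l) *\<^sub>R v' = (1/l) *\<^sub>R (l *\<^sub>R u - v')"
      using l0 by (simp add: scaleR_diff_right)
    then have "norm (u - (1/l) *\<^sub>R v') = norm ((1/l) *\<^sub>R (l *\<^sub>R u - v'))" by simp
    also have "\<dots> = dist (l *\<^sub>R u) v' / l" using l0 by (simp add: dist_norm)
    also have "\<dots> < \<kappa> * norm y + 1" using v'(2) l0 by (simp add: divide_less_eq mult.commute)
    finally show ?thesis using Av by blast
  qed
  show ?thesis unfolding bdd_below_def
  proof (intro exI ballI)
    fix r assume "r \<in> (\<lambda>(u,y). inner g u + (1/2) * (norm y)\<^sup>2) ` {(u,y). A u + y \<in> T}"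
    then obtain u y where uy: "A u + y \<in> T" and r: "r = inner g u + (1/2) * (norm y)\<^sup>2" by auto
    obtain v where v: "A v \<in> T" "norm (u - v) < \<kappa> * norm y + 1" using approx[OF uy] by blast
    have "inner g u = inner g v + inner g (u - v)" by (simp add: inner_diff_right)
    moreover have "inner g v \<ge> 0" using pol[OF v(1)] .
    moreover have "inner g (u - v) \<ge> - (norm g * (\<kappa> * norm y + 1))"
    proof -
      have "\<bar>inner g (u - v)\<bar> \<le> norm g * norm (u - v)" by (rule Cauchy_Schwarz_ineq2)
      also have "\<dots> \<le> norm g * (\<kappa> * norm y + 1)" using v(2) by (simp add: mult_left_mono)
      finally show ?thesis by linarith
    qed
    moreover have "(norm y - norm g * \<kappa>)\<^sup>2 \<ge> 0" by simp
    moreover have "(norm y - norm g * \<kappa>)\<^sup>2 = (norm y)\<^sup>2 - 2 * (norm g * \<kappa> * norm y) + (norm g * \<kappa>)\<^sup>2"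
      by (simp add: power2_diff algebra_simps)
    moreover have "norm g * (\<kappa> * norm y + 1) = norm g * \<kappa> * norm y + norm g"
      by (simp add: algebra_simps)
    ultimately show "- ((norm g * \<kappa>)\<^sup>2 / 2) - norm g \<le> r" unfolding r
      by linarith
  qed
qed

theorem lemma4p6:
  fixes f :: "'a::euclidean_space \<Rightarrow> real" and gf :: "'a \<Rightarrow> 'a"
    and P :: "'a \<Rightarrow> 'b::euclidean_space" and DP :: "'a \<Rightarrow> ('a \<Rightarrow>\<^sub>L 'b)"
    and D :: "'b set" and zb :: 'a
  assumes f_grad: "\<And>z. GDERIV f z :> gf z"
    and gf_cont: "continuous_on UNIV gf"
    and P_deriv: "\<And>z. (P has_derivative blinfun_apply (DP z)) (at z)"
    and DP_cont: "continuous_on UNIV DP"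
    and D_closed: "closed D"
    and Bstat: "b_stationary f {z. P z \<in> D} zb"
    and GGCQ: "regular_normal_cone {z. P z \<in> D} zb
                 = polar_cone (lin_tangent_cone (blinfun_apply (DP zb)) D (P zb))"
    and subreg: "metrically_subregular
                   (\<lambda>u. (\<lambda>t. blinfun_apply (DP zb) u - t) ` tangent_cone D (P zb)) 0 0"
  shows "(\<forall>ub yb. blinfun_apply (DP zb) ub + yb \<in> tangent_cone D (P zb) \<longrightarrow>
            metrically_subregular
              (\<lambda>(u, y). (\<lambda>t. blinfun_apply (DP zb) u + y - t) ` tangent_cone D (P zb))
              (ub, yb) 0)
       \<and> bdd_below ((\<lambda>(u, y). inner (gf zb) u + (1/2) * (norm y)\<^sup>2) `
                     {(u, y). blinfun_apply (DP zb) u + y \<in> tangent_cone D (P zb)})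
       \<and> (\<forall>ub yb. b_stationary (\<lambda>(u, y). inner (gf zb) u + (1/2) * (norm y)\<^sup>2)
                     {(u, y). blinfun_apply (DP zb) u + y \<in> tangent_cone D (P zb)} (ub, yb)
            \<longrightarrow> (\<exists>w \<in> regular_normal_cone (tangent_cone D (P zb)) (blinfun_apply (DP zb) ub + yb).
                   gf zb + adjoint (blinfun_apply (DP zb)) w = 0 \<and> yb + w = 0))"
proof -
  let ?A = "blinfun_apply (DP zb)"
  let ?T = "tangent_cone D (P zb)"
  have lin: "linear ?A" by (rule bounded_linear.linear[OF blinfun.bounded_linear_right])
  have zbO: "P zb \<in> D" using Bstat by (simp add: b_stationary_def)
  have T0: "0 \<in> ?T" by (rule tc_zero[OF zbO])
  have cone: "\<And>x c. x \<in> ?T \<Longrightarrow> c > 0 \<Longrightarrow> c *\<^sub>R x \<in> ?T" by (rule tc_scale)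
  obtain g n where g: "GDERIV f zb :> g" and n: "n \<in> regular_normal_cone {z. P z \<in> D} zb"
      and gn: "g + n = 0"
  proof -
    from Bstat obtain g where "GDERIV f zb :> g" "0 \<in> (\<lambda>n. g + n) ` regular_normal_cone {z. P z \<in> D} zb"
      unfolding b_stationary_def by blast
    then show ?thesis using that by (auto simp: image_iff)
  qed
  have gg: "g = gf zb" using gderiv_unique[OF g f_grad] .
  have pol: "inner (gf zb) v \<ge> 0" if "?A v \<in> ?T" for v
  proof -
    have "v \<in> lin_tangent_cone ?A D (P zb)" using that by (simp add: lin_tangent_cone_def)
    moreover have "n \<in> polar_cone (lin_tangent_cone ?A D (P zb))" using n GGCQ by simp
    ultimately have "inner n v \<le> 0" unfolding polar_cone_def by blast
    moreover have "n = - gf zb" using gn gg by (simp add: eq_neg_iff_add_eq_0 add.commute)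
    ultimately show ?thesis by simp
  qed
  show ?thesis
  proof (intro conjI allI impI)
    fix ub yb assume "?A ub + yb \<in> ?T"
    then show "metrically_subregular (\<lambda>(u, y). (\<lambda>t. ?A u + y - t) ` ?T) (ub, yb) 0"
      using part1[of ?A ub yb ?T] by blast
  next
    show "bdd_below ((\<lambda>(u, y). inner (gf zb) u + (1/2) * (norm y)\<^sup>2) ` {(u, y). ?A u + y \<in> ?T})"
      using part2[of ?A ?T "gf zb", OF lin T0 cone pol subreg] .
  next
    fix ub yb
    assume "b_stationary (\<lambda>(u, y). inner (gf zb) u + (1/2) * (norm y)\<^sup>2) {(u, y). ?A u + y \<in> ?T} (ub, yb)"
    then show "\<exists>w \<in> regular_normal_cone ?T (?A ub + yb). gf zb + adjoint ?A w = 0 \<and> yb + w = 0"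
      by (rule part3[of ?A "gf zb" ?T ub yb, OF lin])
  qed
qed

end
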